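(* Let $m\in\mathbb{N}$. (i) There exist curves $\sigma,\tau$ of complexity $m$ in Euclidean space and a parameter $k$ such that the lengths $|T_{(k\text{-}DTW)}|$ and $|T_{(DTW)}|$ of an optimal $k$-DTW traversal and an optimal DTW traversal of $\sigma$ and $\tau$ differ by an amount linear in $m$ (i.e., $\Omega(m)$); moreover, such instances exist both with $|T_{(k\text{-}DTW)}|<|T_{(DTW)}|$ and with $|T_{(k\text{-}DTW)}|>|T_{(DTW)}|$. (ii) Assume $m\ge 5$. Then for every $k$ with $1\le k\le 4\lfloor m/5\rfloor$ there exist curves $\sigma,\tau$ of complexity $m$ such that $d_{k\text{-}DTW}(\sigma,\tau)$ is not equal to the sum of the $k$ largest distances contributing to $d_{DTW}(\sigma,\tau)$ (i.e., the $k$ largest matched distances of a traversal realizing the DTW distance).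
   Context: Curves are vertex sequences in $\mathbb{R}^d$. For $\sigma=(v_1,\dots,v_{m'})$ and $\tau=(w_1,\dots,w_{m''})$ a traversal $T$ is a sequence of index pairs starting with $(1,1)$, ending with $(m',m'')$, where each $(i,j)$ is followed only by $(i+1,j)$, $(i,j+1)$ or $(i+1,j+1)$; $|T|$ is its number of pairs. The DTW distance is $d_{DTW}(\sigma,\tau)=\min_T\sum_{(i,j)\in T}\|v_i-w_j\|$. With $s^{(T)}_1\ge s^{(T)}_2\ge\dots$ the matched distances of $T$ sorted non-increasingly (padded with zeros beyond $|T|$), $d_{k\text{-}DTW}(\sigma,\tau)=\min_T\sum_{l=1}^k s^{(T)}_l$. An optimal DTW (resp. $k$-DTW) traversal is one attaining the respective minimum. *)

theory Defs
  imports Complex_Main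
begin

text \<open>Points of R^d are represented as functions nat => real; only coordinates
  0..d-1 matter.  Curves are vertex lists; index pairs are 0-based.\<close>

definition euclid_dist :: "nat \<Rightarrow> (nat \<Rightarrow> real) \<Rightarrow> (nat \<Rightarrow> real) \<Rightarrow> real" where
  "euclid_dist d x y = sqrt (\<Sum>i<d. (x i - y i)^2)"

definition valid_step :: "nat \<times> nat \<Rightarrow> nat \<times> nat \<Rightarrow> bool" where
  "valid_step p q \<longleftrightarrow> q = (Suc (fst p), snd p) \<or> q = (fst p, Suc (snd p))
                     \<or> q = (Suc (fst p), Suc (snd p))"

definition is_traversal :: "nat \<Rightarrow> nat \<Rightarrow> (nat \<times> nat) list \<Rightarrow> bool" where
  "is_traversal m1 m2 T \<longleftrightarrow> T \<noteq> [] \<and> hd T = (0, 0) \<and> last T = (m1 - 1, m2 - 1)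
     \<and> (\<forall>l. Suc l < length T \<longrightarrow> valid_step (T ! l) (T ! Suc l))"

definition traversals :: "'a list \<Rightarrow> 'a list \<Rightarrow> (nat \<times> nat) list set" where
  "traversals \<sigma> \<tau> = {T. is_traversal (length \<sigma>) (length \<tau>) T}"

definition matched_dists ::
  "nat \<Rightarrow> (nat \<Rightarrow> real) list \<Rightarrow> (nat \<Rightarrow> real) list \<Rightarrow> (nat \<times> nat) list \<Rightarrow> real list" where
  "matched_dists d \<sigma> \<tau> T = map (\<lambda>(i, j). euclid_dist d (\<sigma> ! i) (\<tau> ! j)) T"

definition dtw_cost where
  "dtw_cost d \<sigma> \<tau> T = sum_list (matched_dists d \<sigma> \<tau> T)"

text \<open>k-DTW cost: sum of the k largest matched distances (padding by zeros is
  implicit, since take k of a shorter list just takes the whole list).\<close>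
definition kdtw_cost where
  "kdtw_cost d k \<sigma> \<tau> T = sum_list (take k (rev (sort (matched_dists d \<sigma> \<tau> T))))"

definition d_DTW where
  "d_DTW d \<sigma> \<tau> = Min (dtw_cost d \<sigma> \<tau> ` traversals \<sigma> \<tau>)"

definition d_kDTW where
  "d_kDTW d k \<sigma> \<tau> = Min (kdtw_cost d k \<sigma> \<tau> ` traversals \<sigma> \<tau>)"

definition opt_DTW_trav where
  "opt_DTW_trav d \<sigma> \<tau> T \<longleftrightarrow> T \<in> traversals \<sigma> \<tau> \<and>
     (\<forall>T' \<in> traversals \<sigma> \<tau>. dtw_cost d \<sigma> \<tau> T \<le> dtw_cost d \<sigma> \<tau> T')"

definition opt_kDTW_trav where
  "opt_kDTW_trav d k \<sigma> \<tau> T \<longleftrightarrow> T \<in> traversals \<sigma> \<tau> \<and>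
     (\<forall>T' \<in> traversals \<sigma> \<tau>. kdtw_cost d k \<sigma> \<tau> T \<le> kdtw_cost d k \<sigma> \<tau> T')"

end

theory Submission
  imports Defs
begin


lemma sum_list_ge_len: "(\<forall>x\<in>set xs. (b::real) \<le> x) \<Longrightarrow> real (length xs) * b \<le> sum_list xs"
  by (induction xs) (auto simp: algebra_simps)

lemma sum_list_le_len: "(\<forall>x\<in>set xs. x \<le> (b::real)) \<Longrightarrow> sum_list xs \<le> real (length xs) * b"
  by (induction xs) (auto simp: algebra_simps)

lemma topk_upper:
  assumes "\<forall>x\<in>set xs. x \<le> (b::real)" "0 \<le> b"
  shows "sum_list (take k (rev (sort xs))) \<le> real k * b"
proof -
  have "sum_list (take k (rev (sort xs))) \<le> real (length (take k (rev (sort xs)))) * b"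
    apply (rule sum_list_le_len) using assms(1) by (auto dest: in_set_takeD)
  also have "\<dots> \<le> real k * b" using assms(2) by (intro mult_right_mono) auto
  finally show ?thesis .
qed

lemma sorted_le_last: "sorted ys \<Longrightarrow> y \<in> set ys \<Longrightarrow> y \<le> last ys"
  by (induction ys) (auto simp: last_in_set)

lemma topk_head:
  assumes "xs \<noteq> []" "1 \<le> k"
  obtains y ys where "rev (sort xs) = y # ys" "\<forall>x\<in>set xs. x \<le> (y::real)"
    "take k (rev (sort xs)) = y # take (k - 1) ys" "length ys = length xs - 1"
proof -
  obtain y ys where e: "rev (sort xs) = y # ys"
    using assms(1) by (metis length_rev length_sort length_0_conv neq_Nil_conv)
  have "y = last (sort xs)" using e by (metis last_rev list.sel(1) rev_is_Nil_conv rev_rev_ident list.distinct(1) hd_rev)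
  then have "\<forall>x\<in>set xs. x \<le> y" by (auto intro: sorted_le_last)
  moreover have "take k (rev (sort xs)) = y # take (k - 1) ys" using e assms(2)
    by (cases k) auto
  moreover have "length ys = length xs - 1" using arg_cong[OF e, of length] by simp
  ultimately show ?thesis using that e by blast
qed

lemma topk_ge_elem:
  assumes "\<forall>x\<in>set xs. (0::real) \<le> x" "z \<in> set xs" "1 \<le> k"
  shows "z \<le> sum_list (take k (rev (sort xs)))"
proof -
  have "xs \<noteq> []" using assms by auto
  from topk_head[OF this assms(3)] obtain y ys where h: "rev (sort xs) = y # ys" "\<forall>x\<in>set xs. x \<le> y"
    "take k (rev (sort xs)) = y # take (k - 1) ys" by blast
  have "set ys \<subseteq> set xs" using arg_cong[OF h(1), of set] by auto
  then have "0 \<le> sum_list (take (k-1) ys)" using assms(1)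
    by (intro sum_list_nonneg) (auto dest: in_set_takeD)
  then show ?thesis using h assms(2) by force
qed

lemma topk_lower:
  assumes "\<forall>x\<in>set xs. (b::real) \<le> x" "z \<in> set xs" "b < z" "1 \<le> k" "k \<le> length xs"
  shows "real k * b < sum_list (take k (rev (sort xs)))"
proof -
  have "xs \<noteq> []" using assms by auto
  from topk_head[OF this assms(4)] obtain y ys where h: "rev (sort xs) = y # ys" "\<forall>x\<in>set xs. x \<le> y"
    "take k (rev (sort xs)) = y # take (k - 1) ys" "length ys = length xs - 1" by blast
  have "set ys \<subseteq> set xs" using arg_cong[OF h(1), of set] by auto
  then have "real (length (take (k-1) ys)) * b \<le> sum_list (take (k-1) ys)" using assms(1)
    by (intro sum_list_ge_len) (auto dest: in_set_takeD)
  moreover have "length (take (k-1) ys) = k - 1" using h(4) assms by auto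
  moreover have "b < y" using h(2) assms by force
  ultimately have "real (k-1) * b + b < sum_list (take k (rev (sort xs)))" using h(3) by simp
  moreover have "real (k-1) * b + b = real k * b" using assms(4) by (simp add: of_nat_diff algebra_simps)
  ultimately show ?thesis by simp
qed



lemma valid_step_props:
  assumes "valid_step p q"
  shows "fst p \<le> fst q \<and> fst q \<le> Suc (fst p) \<and> snd p \<le> snd q \<and> snd q \<le> Suc (snd p)
         \<and> Suc (fst p + snd p) \<le> fst q + snd q"
  using assms unfolding valid_step_def by auto

lemma trav_mono:
  assumes T: "is_traversal m1 m2 T" and ll: "l \<le> l'" and l': "l' < length T"
  shows "fst (T!l) \<le> fst (T!l') \<and> fst (T!l') \<le> fst (T!l) + (l' - l)
       \<and> snd (T!l) \<le> snd (T!l') \<and> snd (T!l') \<le> snd (T!l) + (l' - l)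
       \<and> fst (T!l) + snd (T!l) + (l' - l) \<le> fst (T!l') + snd (T!l')"
  using ll l'
proof (induction l' rule: dec_induct)
  case base
  then show ?case by simp
next
  case (step n)
  have vs: "valid_step (T!n) (T!Suc n)" using T step.prems unfolding is_traversal_def by auto
  have IH: "fst (T!l) \<le> fst (T!n) \<and> fst (T!n) \<le> fst (T!l) + (n - l)
       \<and> snd (T!l) \<le> snd (T!n) \<and> snd (T!n) \<le> snd (T!l) + (n - l)
       \<and> fst (T!l) + snd (T!l) + (n - l) \<le> fst (T!n) + snd (T!n)" using step by simp
  show ?case using valid_step_props[OF vs] IH step.hyps by auto
qed

lemma trav_first: "is_traversal m1 m2 T \<Longrightarrow> T!0 = (0,0)"
  unfolding is_traversal_def by (metis hd_conv_nth)

lemma trav_last: "is_traversal m1 m2 T \<Longrightarrow> T!(length T - 1) = (m1 - 1, m2 - 1)"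
  unfolding is_traversal_def by (metis last_conv_nth)

lemma trav_bounds:
  assumes T: "is_traversal m1 m2 T" and l: "l < length T"
  shows "fst (T!l) \<le> l" "snd (T!l) \<le> l"
    "m1 - 1 \<le> fst (T!l) + (length T - 1 - l)" "m2 - 1 \<le> snd (T!l) + (length T - 1 - l)"
    "fst (T!l) \<le> m1 - 1" "snd (T!l) \<le> m2 - 1"
    "fst (T!l) + snd (T!l) \<ge> l"
proof -
  have ne: "T \<noteq> []" using T unfolding is_traversal_def by auto
  note a = trav_mono[OF T, of 0 l] trav_first[OF T]
  note b = trav_mono[OF T, of l "length T - 1"] trav_last[OF T]
  show "fst (T!l) \<le> l" "snd (T!l) \<le> l" "fst (T!l) + snd (T!l) \<ge> l" using a l by auto
  show "m1 - 1 \<le> fst (T!l) + (length T - 1 - l)" "m2 - 1 \<le> snd (T!l) + (length T - 1 - l)"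
    "fst (T!l) \<le> m1 - 1" "snd (T!l) \<le> m2 - 1" using b l by auto
qed

lemma trav_len_ge:
  assumes T: "is_traversal m m T" and l: "l < length T" and "T!l = (i,j)"
  shows "m + (i - j) \<le> length T" "m + (j - i) \<le> length T" "m \<le> length T"
  using trav_bounds[OF T l] assms(3) l by auto

lemma trav_antidiag:
  assumes T: "is_traversal m1 m2 T" and S: "S + 2 \<le> m1 + m2"
  shows "\<exists>l < length T. S \<le> fst (T!l) + snd (T!l) \<and> fst (T!l) + snd (T!l) \<le> S + 1"
  using S
proof (induction S)
  case 0
  then show ?case using trav_first[OF T] T unfolding is_traversal_def by (intro exI[of _ 0]) auto
next
  case (Suc S)
  then obtain l where l: "l < length T" "S \<le> fst (T!l) + snd (T!l)" "fst (T!l) + snd (T!l) \<le> S + 1" by auto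
  show ?case
  proof (cases "fst (T!l) + snd (T!l) = S + 1")
    case True
    then show ?thesis using l by auto
  next
    case False
    have "Suc l < length T"
    proof (rule ccontr)
      assume "\<not> Suc l < length T"
      then have "l = length T - 1" using l by auto
      then show False using trav_last[OF T] False l Suc.prems by auto
    qed
    moreover have "valid_step (T!l) (T!Suc l)" using T calculation unfolding is_traversal_def by auto
    ultimately show ?thesis using valid_step_props[of "T!l" "T!Suc l"] False l
      by (intro exI[of _ "Suc l"]) auto
  qed
qed

lemma trav_finite: "finite (traversals (\<sigma>::'a list) (\<tau>::'a list))"
proof -
  let ?m1 = "length \<sigma>" and ?m2 = "length \<tau>"
  have "traversals \<sigma> \<tau> \<subseteq> {T. set T \<subseteq> {..?m1+?m2} \<times> {..?m1+?m2} \<and> length T \<le> ?m1 + ?m2 + 1}"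
  proof
    fix T assume "T \<in> traversals \<sigma> \<tau>"
    then have T: "is_traversal ?m1 ?m2 T" unfolding traversals_def by auto
    have "length T \<le> ?m1 + ?m2 + 1"
    proof -
      have ne: "T \<noteq> []" using T unfolding is_traversal_def by auto
      have "length T - 1 \<le> fst (T!(length T - 1)) + snd (T!(length T - 1))"
        using trav_bounds(7)[OF T, of "length T - 1"] ne by auto
      then show ?thesis using trav_last[OF T] ne by auto
    qed
    moreover have "set T \<subseteq> {..?m1+?m2} \<times> {..?m1+?m2}"
    proof
      fix p assume "p \<in> set T"
      then obtain l where l: "l < length T" "p = T!l" by (auto simp: in_set_conv_nth)
      then show "p \<in> {..?m1+?m2} \<times> {..?m1+?m2}" using trav_bounds[OF T l(1)] l(2) calculation
        by (cases "T!l") auto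
    qed
    ultimately show "T \<in> {T. set T \<subseteq> {..?m1+?m2} \<times> {..?m1+?m2} \<and> length T \<le> ?m1 + ?m2 + 1}" by auto
  qed
  moreover have "finite {T. set T \<subseteq> {..?m1+?m2} \<times> {..?m1+?m2} \<and> length T \<le> ?m1 + ?m2 + 1}"
    by (rule finite_lists_length_le) auto
  ultimately show ?thesis by (rule finite_subset)
qed

lemma dkdtw_le: "T \<in> traversals \<sigma> \<tau> \<Longrightarrow> d_kDTW d k \<sigma> \<tau> \<le> kdtw_cost d k \<sigma> \<tau> T"
  unfolding d_kDTW_def using trav_finite by (intro Min_le) auto

lemma matched_nth: "l < length T \<Longrightarrow> matched_dists d \<sigma> \<tau> T ! l = euclid_dist d (\<sigma> ! fst (T!l)) (\<tau> ! snd (T!l))"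
  unfolding matched_dists_def by (cases "T!l") auto

lemma set_matched: "x \<in> set (matched_dists d \<sigma> \<tau> T) \<longleftrightarrow> (\<exists>l < length T. x = euclid_dist d (\<sigma> ! fst (T!l)) (\<tau> ! snd (T!l)))"
proof -
  have "x \<in> set (map (\<lambda>(i, j). euclid_dist d (\<sigma> ! i) (\<tau> ! j)) T) \<longleftrightarrow>
    (\<exists>l < length T. x = (\<lambda>(i, j). euclid_dist d (\<sigma> ! i) (\<tau> ! j)) (T!l))"
    by (metis (no_types, lifting) in_set_conv_nth length_map nth_map)
  then show ?thesis unfolding matched_dists_def by (simp add: case_prod_beta)
qed

lemma euclid_nonneg: "0 \<le> euclid_dist d x y"
  unfolding euclid_dist_def by (auto intro: sum_nonneg)



definition gS :: "nat \<Rightarrow> nat \<Rightarrow> nat" where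
  "gS m j = (if 0 < j \<and> j < m - 1 then j else m)"
definition pS :: "nat \<Rightarrow> nat \<Rightarrow> nat \<Rightarrow> real" where
  "pS m i = (\<lambda>c. (if c = i then 1 else 0) + (if c = m + 2 then real m else 0))"
definition pT :: "nat \<Rightarrow> nat \<Rightarrow> nat \<Rightarrow> real" where
  "pT m j = (\<lambda>c. - (if c = gS m j then 1 else 0))"

lemma dist_S:
  assumes "i < m"
  shows "euclid_dist (m+3) (pS m i) (pT m j) = sqrt (2 + (real m)^2 + (if i = gS m j then 2 else 0))"
proof -
  have g: "gS m j \<le> m" unfolding gS_def by auto
  have pw: "(pS m i c - pT m j c)^2 = (if c = i then 1 else 0) + (if c = gS m j then 1 else 0)
      + (if i = gS m j then (if c = i then 2 else 0) else 0) + (if c = m + 2 then (real m)^2 else 0)" for c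
    using assms g unfolding pS_def pT_def by (auto simp: power2_eq_square)
  have "(\<Sum>c<m+3. (pS m i c - pT m j c)^2) = 2 + (real m)^2 + (if i = gS m j then 2 else 0)"
    unfolding pw sum.distrib using assms g by (simp add: sum.delta)
  then show ?thesis unfolding euclid_dist_def by simp
qed

lemma partii:
  assumes m: "3 \<le> m" and k: "1 \<le> k" "k \<le> m"
  shows "\<exists>d \<sigma> \<tau>. length \<sigma> = m \<and> length \<tau> = m \<and>
               (\<forall>T. opt_DTW_trav d \<sigma> \<tau> T \<longrightarrow> d_kDTW d k \<sigma> \<tau> \<noteq> kdtw_cost d k \<sigma> \<tau> T)"
proof -
  define \<sigma> where "\<sigma> = map (pS m) [0..<m]"
  define \<tau> where "\<tau> = map (pT m) [0..<m]"
  define d where "d = m + 3"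
  define \<alpha> where "\<alpha> = sqrt (4 + (real m)^2)"
  define \<beta> where "\<beta> = sqrt (2 + (real m)^2)"
  have cell: "euclid_dist d (\<sigma>!i) (\<tau>!j) = (if i = j \<and> 0 < j \<and> j < m - 1 then \<alpha> else \<beta>)"
    if "i < m" "j < m" for i j
    using that dist_S[of i m j] unfolding \<sigma>_def \<tau>_def d_def \<alpha>_def \<beta>_def gS_def by auto
  have ab: "\<beta> < \<alpha>" unfolding \<alpha>_def \<beta>_def by simp
  have b0: "0 \<le> \<beta>" unfolding \<beta>_def by simp
  have key: "real m * \<alpha> < (real m + 1) * \<beta>"
  proof -
    have "real m * \<alpha> = sqrt ((real m)^2 * (4 + (real m)^2))" unfolding \<alpha>_def by (simp add: real_sqrt_mult)
    also have "\<dots> < sqrt ((real m + 1)^2 * (2 + (real m)^2))"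
    proof (rule real_sqrt_less_mono)
      have "0 < 2 * (real m)^3 - (real m)^2 + 4 * real m + 2"
      proof -
        have "(real m)^2 \<le> 2 * (real m)^3" using m by (simp add: power2_eq_square power3_eq_cube)
        then show ?thesis using m by simp
      qed
      then show "(real m)^2 * (4 + (real m)^2) < (real m + 1)^2 * (2 + (real m)^2)"
        by (simp add: power2_eq_square power3_eq_cube algebra_simps)
    qed
    also have "\<dots> = (real m + 1) * \<beta>" unfolding \<beta>_def by (simp add: real_sqrt_mult)
    finally show ?thesis .
  qed
  have len: "length \<sigma> = m" "length \<tau> = m" unfolding \<sigma>_def \<tau>_def by auto
  have cost_bounds: "\<beta> \<le> x \<and> x \<le> \<alpha>" if T: "is_traversal m m T" and x: "x \<in> set (matched_dists d \<sigma> \<tau> T)" for T x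
  proof -
    from x obtain l where l: "l < length T" "x = euclid_dist d (\<sigma> ! fst (T!l)) (\<tau> ! snd (T!l))"
      by (auto simp: set_matched)
    have "fst (T!l) < m" "snd (T!l) < m" using trav_bounds[OF T l(1)] m by auto
    then show ?thesis using l cell ab by auto
  qed
  define f where "f = (\<lambda>l::nat. if l = 0 then (0::nat, 0::nat) else if l < m then (l, l - 1) else (m - 1, m - 1))"
  define T' where "T' = map f [0..<m+1]"
  have T'tr: "is_traversal m m T'"
    unfolding is_traversal_def
  proof (intro conjI allI impI)
    show "T' \<noteq> []" unfolding T'_def by simp
    show "hd T' = (0,0)" unfolding T'_def f_def by (simp add: hd_map)
    show "last T' = (m - 1, m - 1)" unfolding T'_def f_def by (simp add: last_map)
    fix l assume "Suc l < length T'"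
    then have "Suc l < m + 1" unfolding T'_def by simp
    then show "valid_step (T' ! l) (T' ! Suc l)" unfolding T'_def f_def valid_step_def
      using m by (simp only: nth_map_upt) auto
  qed
  have T'in: "T' \<in> traversals \<sigma> \<tau>" unfolding traversals_def using T'tr len by simp
  have T'cost: "kdtw_cost d k \<sigma> \<tau> T' \<le> real k * \<beta>"
    unfolding kdtw_cost_def
  proof (rule topk_upper[OF _ b0])
    show "\<forall>x\<in>set (matched_dists d \<sigma> \<tau> T'). x \<le> \<beta>"
    proof
      fix x assume "x \<in> set (matched_dists d \<sigma> \<tau> T')"
      then obtain l where l: "l < length T'" "x = euclid_dist d (\<sigma> ! fst (T'!l)) (\<tau> ! snd (T'!l))"
        by (auto simp: set_matched)
      have l': "l < m + 1" using l unfolding T'_def by simp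
      have "T'!l = f l" unfolding T'_def using l' by (simp del: upt_Suc)
      then show "x \<le> \<beta>" using l l' cell m unfolding f_def by (auto split: if_splits)
    qed
  qed
  have "\<forall>T. opt_DTW_trav d \<sigma> \<tau> T \<longrightarrow> d_kDTW d k \<sigma> \<tau> \<noteq> kdtw_cost d k \<sigma> \<tau> T"
  proof (intro allI impI)
    fix T assume opt: "opt_DTW_trav d \<sigma> \<tau> T"
    then have T: "is_traversal m m T" unfolding opt_DTW_trav_def traversals_def using len by simp
    define D where "D = map (\<lambda>l. (l, l)) [0..<m]"
    have Dtr: "is_traversal m m D" unfolding is_traversal_def D_def valid_step_def using m
      by (auto simp: hd_map last_map)
    have "dtw_cost d \<sigma> \<tau> T \<le> dtw_cost d \<sigma> \<tau> D"
      using opt Dtr len unfolding opt_DTW_trav_def traversals_def by auto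
    also have "\<dots> \<le> real m * \<alpha>"
    proof -
      have "dtw_cost d \<sigma> \<tau> D \<le> real (length (matched_dists d \<sigma> \<tau> D)) * \<alpha>"
        unfolding dtw_cost_def using cost_bounds[OF Dtr] by (intro sum_list_le_len) auto
      then show ?thesis by (simp add: matched_dists_def D_def)
    qed
    finally have c1: "dtw_cost d \<sigma> \<tau> T \<le> real m * \<alpha>" .
    have c2: "real (length T) * \<beta> \<le> dtw_cost d \<sigma> \<tau> T"
    proof -
      have "real (length (matched_dists d \<sigma> \<tau> T)) * \<beta> \<le> dtw_cost d \<sigma> \<tau> T"
        unfolding dtw_cost_def using cost_bounds[OF T] by (intro sum_list_ge_len) auto
      then show ?thesis by (simp add: matched_dists_def)
    qed
    have "length T \<le> m"
    proof (rule ccontr)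
      assume "\<not> length T \<le> m"
      then have "real m + 1 \<le> real (length T)" by simp
      then have "(real m + 1) * \<beta> \<le> real (length T) * \<beta>" using b0 by (intro mult_right_mono)
      then show False using c1 c2 key by simp
    qed
    moreover have "m \<le> length T" using trav_len_ge(3)[OF T, of 0] T trav_first[OF T]
      unfolding is_traversal_def by auto
    ultimately have LT: "length T = m" by simp
    have T1: "T ! 1 = (1,1)" using trav_bounds[OF T, of 1] LT m by (cases "T!1") auto
    have "real k * \<beta> < kdtw_cost d k \<sigma> \<tau> T"
      unfolding kdtw_cost_def
    proof (rule topk_lower[where z = \<alpha>])
      show "\<forall>x\<in>set (matched_dists d \<sigma> \<tau> T). \<beta> \<le> x" using cost_bounds[OF T] by auto
      show "\<alpha> \<in> set (matched_dists d \<sigma> \<tau> T)" unfolding set_matched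
        using T1 LT m cell[of 1 1] by (intro exI[of _ 1]) auto
      show "\<beta> < \<alpha>" by (rule ab)
      show "1 \<le> k" by (rule k)
      show "k \<le> length (matched_dists d \<sigma> \<tau> T)" using LT k by (simp add: matched_dists_def)
    qed
    moreover have "d_kDTW d k \<sigma> \<tau> \<le> real k * \<beta>" using dkdtw_le[OF T'in, of d k] T'cost by linarith
    ultimately show "d_kDTW d k \<sigma> \<tau> \<noteq> kdtw_cost d k \<sigma> \<tau> T" by simp
  qed
  then show ?thesis using len by blast
qed



definition pt :: "nat \<Rightarrow> nat \<Rightarrow> nat \<Rightarrow> real" where
  "pt s n = (\<lambda>c. (if c = n mod s then 1 else 0) + (if c = s then real (n div s) else 0))"

lemma dist_pt:
  assumes s: "0 < s"
  shows "euclid_dist (Suc s) (pt s a) (pt s b) =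
    sqrt ((if a mod s = b mod s then 0 else 2) + (real (a div s) - real (b div s))^2)"
proof -
  have ra: "a mod s < s" "b mod s < s" using s by auto
  have ns: "a mod s \<noteq> s" "b mod s \<noteq> s" using less_imp_neq[OF ra(1)] less_imp_neq[OF ra(2)] by auto
  have pw: "(pt s a c - pt s b c)^2 = (if c = a mod s then 1 else 0) + (if c = b mod s then 1 else 0)
      - (if a mod s = b mod s then (if c = a mod s then 2 else 0) else 0)
      + (if c = s then (real (a div s) - real (b div s))^2 else 0)" for c
  proof (cases "c = s")
    case True
    have "c \<noteq> a mod s" "c \<noteq> b mod s" using True ns by auto
    then show ?thesis using True unfolding pt_def by simp
  next
    case False
    then show ?thesis unfolding pt_def by (auto simp: power2_eq_square)
  qed
  have "(\<Sum>c<Suc s. (pt s a c - pt s b c)^2) = (if a mod s = b mod s then 0 else 2) + (real (a div s) - real (b div s))^2"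
    unfolding pw sum.distrib sum_subtractf using ra ns by (simp add: sum.delta)
  then show ?thesis unfolding euclid_dist_def by simp
qed

lemma pt_diag: "0 < s \<Longrightarrow> euclid_dist (Suc s) (pt s i) (pt s (i + s)) = 1"
  by (simp add: dist_pt)

lemma pt_lvl1: "0 < s \<Longrightarrow> a mod s \<noteq> b mod s \<Longrightarrow> 1 < euclid_dist (Suc s) (pt s a) (pt s b)"
proof -
  assume s: "0 < s" and "a mod s \<noteq> b mod s"
  then have "euclid_dist (Suc s) (pt s a) (pt s b) = sqrt (2 + (real (a div s) - real (b div s))^2)"
    by (simp add: dist_pt)
  also have "sqrt 1 < \<dots>" by (intro real_sqrt_less_mono) (simp add: add_pos_nonneg)
  finally show ?thesis by simp
qed

lemma pt_ne: "0 < s \<Longrightarrow> a \<noteq> b \<Longrightarrow> 1 \<le> euclid_dist (Suc s) (pt s a) (pt s b)"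
proof -
  assume s: "0 < s" and ab: "a \<noteq> b"
  show ?thesis
  proof (cases "a mod s = b mod s")
    case True
    then have "a div s \<noteq> b div s" using ab by (metis div_mult_mod_eq)
    then have "1 \<le> (real (a div s) - real (b div s))^2"
    proof -
      assume "a div s \<noteq> b div s"
      then have "1 \<le> \<bar>real (a div s) - real (b div s)\<bar>" by linarith
      then have "1 * 1 \<le> \<bar>real (a div s) - real (b div s)\<bar> * \<bar>real (a div s) - real (b div s)\<bar>"
        by (intro mult_mono) auto
      then show ?thesis by (simp add: power2_eq_square)
    qed
    then show ?thesis unfolding dist_pt[OF s] using True by (intro real_le_rsqrt) simp
  next
    case False
    then show ?thesis using pt_lvl1[OF s False] by simp
  qed
qed

lemma pt_close: "0 < s \<Longrightarrow> a \<le> b \<Longrightarrow> b \<le> a + s \<Longrightarrow> euclid_dist (Suc s) (pt s a) (pt s b) \<le> 2"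
proof -
  assume s: "0 < s" and ab: "a \<le> b" "b \<le> a + s"
  have q1: "a div s \<le> b div s" using ab by (simp add: div_le_mono)
  have q2: "b div s \<le> a div s + 1"
  proof -
    have "b div s \<le> (a + s) div s" using ab by (simp add: div_le_mono)
    also have "\<dots> = a div s + 1" using s by simp
    finally show ?thesis .
  qed
  have "(real (a div s) - real (b div s))^2 \<le> 1"
  proof -
    have "\<bar>real (a div s) - real (b div s)\<bar> \<le> 1" using q1 q2 by linarith
    then have "\<bar>real (a div s) - real (b div s)\<bar> * \<bar>real (a div s) - real (b div s)\<bar> \<le> 1 * 1"
      by (intro mult_mono) auto
    then show ?thesis by (simp add: power2_eq_square)
  qed
  then have "euclid_dist (Suc s) (pt s a) (pt s b) \<le> sqrt 4"
    unfolding dist_pt[OF s] by (intro real_sqrt_le_mono) simp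
  also have "sqrt 4 = (2::real)" by (simp add: real_sqrt_eq_iff)
  finally show ?thesis .
qed

lemma upt_split3: "i \<le> j \<Longrightarrow> j \<le> k \<Longrightarrow> [i..<k] = [i..<j] @ [j..<k]"
  using upt_add_eq_append[of i j "k-j"] by simp

lemma matched_map: "matched_dists d \<sigma> \<tau> (map f xs) = map (\<lambda>l. euclid_dist d (\<sigma> ! fst (f l)) (\<tau> ! snd (f l))) xs"
  unfolding matched_dists_def by (simp add: case_prod_beta)

lemma instY:
  assumes m: "16 \<le> m"
  shows "\<exists>d k \<sigma> \<tau>. length \<sigma> = m \<and> length \<tau> = m \<and> 1 \<le> k \<and>
               (\<forall>T1 T2. opt_kDTW_trav d k \<sigma> \<tau> T1 \<longrightarrow> opt_DTW_trav d \<sigma> \<tau> T2 \<longrightarrow>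
                  real (length T2) - real (length T1) \<ge> (1/16) * real m)"
proof -
  define s where "s = m div 8"
  have s2: "2 \<le> s" using m unfolding s_def by simp
  have s0: "0 < s" using s2 by simp
  have sm: "4 * s + 2 < m" using m unfolding s_def by simp
  have s16: "real m \<le> 16 * real s"
  proof -
    have "m \<le> 16 * s" using m unfolding s_def by simp
    then show ?thesis by (metis of_nat_le_iff of_nat_mult of_nat_numeral)
  qed
  define \<sigma> where "\<sigma> = map (pt s) [0..<m]"
  define \<tau> where "\<tau> = map (\<lambda>j. pt s (j + s)) [0..<m]"
  define d where "d = Suc s"
  have len: "length \<sigma> = m" "length \<tau> = m" unfolding \<sigma>_def \<tau>_def by auto
  have cell: "euclid_dist d (\<sigma>!i) (\<tau>!j) = euclid_dist (Suc s) (pt s i) (pt s (j + s))"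
    if "i < m" "j < m" for i j
    using that unfolding \<sigma>_def \<tau>_def d_def by simp
  have cnn: "0 \<le> x" if "x \<in> set (matched_dists d \<sigma> \<tau> T)" for x T
    using that by (auto simp: set_matched euclid_nonneg)
  define D where "D = map (\<lambda>l. (l, l)) [0..<m]"
  have Dtr: "is_traversal m m D" unfolding is_traversal_def D_def valid_step_def using m
    by (auto simp: hd_map last_map)
  define f where "f = (\<lambda>l. if l \<le> s then (l, 0) else if l < m then (l, l - s) else (m - 1, l - s))"
  define P where "P = map f [0..<m+s]"
  have Ptr: "is_traversal m m P"
    unfolding is_traversal_def
  proof (intro conjI allI impI)
    show "P \<noteq> []" unfolding P_def using m by simp
    show "hd P = (0,0)" unfolding P_def f_def using m by (simp add: hd_map)
    have ne: "[0..<m+s] \<noteq> []" using m by simp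
    have lu: "last [0..<m+s] = m + s - 1" by (rule last_upt) (use m in simp)
    have "last P = f (m + s - 1)" unfolding P_def last_map[OF ne] lu ..
    then show "last P = (m - 1, m - 1)" unfolding f_def using m s2 by simp
    fix l assume "Suc l < length P"
    then have "Suc l < m + s" unfolding P_def by simp
    then show "valid_step (P ! l) (P ! Suc l)" unfolding P_def f_def valid_step_def
      using sm by (simp only: nth_map_upt) auto
  qed
  have Pcost: "dtw_cost d \<sigma> \<tau> P \<le> 4 * real s + 2"
  proof -
    let ?c = "\<lambda>l. euclid_dist d (\<sigma> ! fst (f l)) (\<tau> ! snd (f l))"
    have split: "[0..<m+s] = [0..<s+1] @ [s+1..<m] @ [m..<m+s]"
      using sm upt_split3[of 0 "s+1" "m+s"] upt_split3[of "s+1" m "m+s"] by simp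
    have "dtw_cost d \<sigma> \<tau> P = sum_list (map ?c [0..<s+1]) + sum_list (map ?c [s+1..<m]) + sum_list (map ?c [m..<m+s])"
      unfolding dtw_cost_def P_def matched_map split by simp
    also have "\<dots> \<le> real (s+1) * 2 + real (m - (s+1)) * 0 + real s * 2"
    proof (intro add_mono)
      have "sum_list (map ?c [0..<s+1]) \<le> real (length (map ?c [0..<s+1])) * 2"
      proof (rule sum_list_le_len, intro ballI)
        fix x assume "x \<in> set (map ?c [0..<s+1])"
        then obtain l where "l \<in> set [0..<s+1]" and xl: "x = ?c l" by (simp only: set_map) blast
        then have l: "l \<le> s" by auto
        then have "f l = (l, 0)" unfolding f_def by simp
        then show "x \<le> 2" unfolding xl using l sm cell[of l 0] pt_close[OF s0, of l s] by simp
      qed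
      then show "sum_list (map ?c [0..<s+1]) \<le> real (s+1) * 2" by simp
      have "sum_list (map ?c [s+1..<m]) \<le> real (length (map ?c [s+1..<m])) * 0"
      proof (rule sum_list_le_len, intro ballI)
        fix x assume "x \<in> set (map ?c [s+1..<m])"
        then obtain l where "l \<in> set [s+1..<m]" and xl: "x = ?c l" by (simp only: set_map) blast
        then have l: "s < l" "l < m" by auto
        then have "f l = (l, l - s)" unfolding f_def by simp
        then show "x \<le> 0" unfolding xl using l cell[of l "l - s"] by (simp add: euclid_dist_def)
      qed
      then show "sum_list (map ?c [s+1..<m]) \<le> real (m - (s+1)) * 0" by simp
      have "sum_list (map ?c [m..<m+s]) \<le> real (length (map ?c [m..<m+s])) * 2"
      proof (rule sum_list_le_len, intro ballI)
        fix x assume "x \<in> set (map ?c [m..<m+s])"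
        then obtain l where "l \<in> set [m..<m+s]" and xl: "x = ?c l" by (simp only: set_map) blast
        then have l: "m \<le> l" "l < m + s" by auto
        then have "f l = (m - 1, l - s)" unfolding f_def using s2 sm by simp
        then show "x \<le> 2" unfolding xl using l m sm cell[of "m-1" "l - s"] pt_close[OF s0, of "m-1" l] by (simp add: le_add_diff_inverse2)
      qed
      then show "sum_list (map ?c [m..<m+s]) \<le> real s * 2" by simp
    qed
    finally show ?thesis by (simp add: algebra_simps)
  qed
  have "\<forall>T1 T2. opt_kDTW_trav d 1 \<sigma> \<tau> T1 \<longrightarrow> opt_DTW_trav d \<sigma> \<tau> T2 \<longrightarrow>
                  real (length T2) - real (length T1) \<ge> (1/16) * real m"
  proof (intro allI impI)
    fix T1 T2 assume o1: "opt_kDTW_trav d 1 \<sigma> \<tau> T1" and o2: "opt_DTW_trav d \<sigma> \<tau> T2"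
    have T1: "is_traversal m m T1" using o1 len unfolding opt_kDTW_trav_def traversals_def by simp
    have T2: "is_traversal m m T2" using o2 len unfolding opt_DTW_trav_def traversals_def by simp
    have "kdtw_cost d 1 \<sigma> \<tau> T1 \<le> kdtw_cost d 1 \<sigma> \<tau> D"
      using o1 Dtr len unfolding opt_kDTW_trav_def traversals_def by auto
    also have "\<dots> \<le> real 1 * 1" unfolding kdtw_cost_def
    proof (rule topk_upper)
      show "\<forall>x\<in>set (matched_dists d \<sigma> \<tau> D). x \<le> 1"
      proof
        fix x assume "x \<in> set (matched_dists d \<sigma> \<tau> D)"
        then obtain l where "l < m" "x = euclid_dist d (\<sigma> ! l) (\<tau> ! l)"
          unfolding set_matched D_def by auto
        then show "x \<le> 1" using cell pt_diag[OF s0] by simp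
      qed
    qed simp
    finally have k1: "kdtw_cost d 1 \<sigma> \<tau> T1 \<le> 1" by simp
    have small: "euclid_dist d (\<sigma> ! fst (T1!l)) (\<tau> ! snd (T1!l)) \<le> 1" if "l < length T1" for l
    proof -
      have "euclid_dist d (\<sigma> ! fst (T1!l)) (\<tau> ! snd (T1!l)) \<le> kdtw_cost d 1 \<sigma> \<tau> T1"
        unfolding kdtw_cost_def using that by (intro topk_ge_elem) (auto simp: set_matched euclid_nonneg)
      then show ?thesis using k1 by simp
    qed
    have diag: "T1 ! l = (l, l)" if "l < length T1" for l
      using that
    proof (induction l)
      case 0
      then show ?case using trav_first[OF T1] by simp
    next
      case (Suc l)
      then have IH: "T1 ! l = (l, l)" by simp
      have vs: "valid_step (T1!l) (T1!Suc l)" using T1 Suc.prems unfolding is_traversal_def by auto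
      have bnd: "fst (T1 ! Suc l) < m" "snd (T1 ! Suc l) < m" using trav_bounds[OF T1 Suc.prems] m by auto
      have sm1: "euclid_dist d (\<sigma> ! fst (T1!Suc l)) (\<tau> ! snd (T1!Suc l)) \<le> 1" using small Suc.prems by simp
      have modne1: "(Suc l) mod s \<noteq> (l + s) mod s"
      proof -
        have "(l + s) mod s = l mod s" by simp
        moreover have "Suc l mod s \<noteq> l mod s" using s2 by (simp add: mod_Suc)
        ultimately show ?thesis by simp
      qed
      have modne2: "l mod s \<noteq> (Suc l + s) mod s"
      proof -
        have "(Suc l + s) mod s = Suc l mod s" by (simp only: mod_add_self2)
        moreover have "Suc l mod s \<noteq> l mod s" using s2 by (simp add: mod_Suc)
        ultimately show ?thesis by simp
      qed
      have "T1 ! Suc l \<noteq> (Suc l, l)"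
      proof
        assume e: "T1 ! Suc l = (Suc l, l)"
        then have "1 < euclid_dist d (\<sigma> ! fst (T1!Suc l)) (\<tau> ! snd (T1!Suc l))"
          using bnd cell pt_lvl1[OF s0 modne1] by simp
        then show False using sm1 by simp
      qed
      moreover have "T1 ! Suc l \<noteq> (l, Suc l)"
      proof
        assume e: "T1 ! Suc l = (l, Suc l)"
        then have "1 < euclid_dist d (\<sigma> ! fst (T1!Suc l)) (\<tau> ! snd (T1!Suc l))"
          using bnd cell pt_lvl1[OF s0 modne2] by simp
        then show False using sm1 by simp
      qed
      ultimately show ?case using vs IH unfolding valid_step_def by auto
    qed
    have L1: "length T1 = m"
    proof -
      have ne: "T1 \<noteq> []" using T1 unfolding is_traversal_def by simp
      have "T1 ! (length T1 - 1) = (length T1 - 1, length T1 - 1)" using diag ne by simp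
      then show ?thesis using trav_last[OF T1] ne m by simp
    qed
    have "\<exists>l < length T2. s \<le> fst (T2!l) - snd (T2!l) \<or> s \<le> snd (T2!l) - fst (T2!l)"
    proof (rule ccontr)
      assume "\<not> ?thesis"
      then have band: "fst (T2!l) < snd (T2!l) + s" if "l < length T2" for l
        using that by auto
      have "real (length (matched_dists d \<sigma> \<tau> T2)) * 1 \<le> dtw_cost d \<sigma> \<tau> T2"
        unfolding dtw_cost_def
      proof (rule sum_list_ge_len, safe)
        fix x assume "x \<in> set (matched_dists d \<sigma> \<tau> T2)"
        then obtain l where l: "l < length T2" "x = euclid_dist d (\<sigma> ! fst (T2!l)) (\<tau> ! snd (T2!l))"
          by (auto simp: set_matched)
        have "fst (T2!l) < m" "snd (T2!l) < m" using trav_bounds[OF T2 l(1)] m by auto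
        then show "1 \<le> x" using l cell band[OF l(1)] pt_ne[OF s0, of "fst (T2!l)" "snd (T2!l) + s"] by simp
      qed
      moreover have "m \<le> length T2" using trav_len_ge(3)[OF T2, of 0] T2 trav_first[OF T2]
        unfolding is_traversal_def by auto
      moreover have "dtw_cost d \<sigma> \<tau> T2 \<le> dtw_cost d \<sigma> \<tau> P"
        using o2 Ptr len unfolding opt_DTW_trav_def traversals_def by auto
      ultimately have "real m \<le> 4 * real s + 2" using Pcost by (simp add: matched_dists_def)
      then show False using sm by linarith
    qed
    then obtain l where l: "l < length T2" "s \<le> fst (T2!l) - snd (T2!l) \<or> s \<le> snd (T2!l) - fst (T2!l)" by blast
    have "m + s \<le> length T2" using trav_len_ge[OF T2 l(1), of "fst (T2!l)" "snd (T2!l)"] l(2) by auto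
    then have "real m + real s \<le> real (length T2)" by linarith
    then show "real (length T2) - real (length T1) \<ge> (1/16) * real m" using L1 s16 by simp
  qed
  then show ?thesis using len by (intro exI[of _ d] exI[of _ 1]) auto
qed



definition sO :: "nat \<Rightarrow> real" where "sO = (\<lambda>c. 0)"
definition sI :: "nat \<Rightarrow> real" where "sI = (\<lambda>c. 1)"
definition tO :: "nat \<Rightarrow> real" where "tO = (\<lambda>c. if c = 0 then 1 else 0)"
definition tI :: "nat \<Rightarrow> real" where "tI = (\<lambda>c. if c = 0 then -3/5 else 4/5)"

lemma ed2: "euclid_dist 2 x y = sqrt ((x 0 - y 0)^2 + (x 1 - y 1)^2)"
  unfolding euclid_dist_def by (simp add: numeral_2_eq_2)

lemma dOO: "euclid_dist 2 sO tO = 1" unfolding ed2 sO_def tO_def by simp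
lemma dOI: "euclid_dist 2 sO tI = 1" unfolding ed2 sO_def tI_def by (simp add: power2_eq_square)
lemma dIO: "euclid_dist 2 sI tO = 1" unfolding ed2 sI_def tO_def by simp
lemma dII: "euclid_dist 2 sI tI = sqrt (13/5)" unfolding ed2 sI_def tI_def by (simp add: power2_eq_square)

lemma B_bounds: "1 \<le> sqrt (13/5::real)" "sqrt (13/5::real) \<le> 81/50"
proof -
  show "1 \<le> sqrt (13/5::real)" by (rule real_le_rsqrt) simp
  have "sqrt (13/5::real) \<le> sqrt ((81/50)^2)" by (rule real_sqrt_le_mono) (simp add: power2_eq_square)
  then show "sqrt (13/5::real) \<le> 81/50" by simp
qed

lemma instX:
  assumes m: "16 \<le> m"
  shows "\<exists>d k \<sigma> \<tau>. length \<sigma> = m \<and> length \<tau> = m \<and> 1 \<le> k \<and>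
               (\<forall>T1 T2. opt_kDTW_trav d k \<sigma> \<tau> T1 \<longrightarrow> opt_DTW_trav d \<sigma> \<tau> T2 \<longrightarrow>
                  real (length T1) - real (length T2) \<ge> (1/16) * real m)"
proof -
  define inI where "inI = (\<lambda>i. 1 \<le> i \<and> i \<le> m - 2)"
  define \<sigma> where "\<sigma> = map (\<lambda>i. if inI i then sI else sO) [0..<m]"
  define \<tau> where "\<tau> = map (\<lambda>j. if inI j then tI else tO) [0..<m]"
  define d where "d = (2::nat)"
  define B where "B = sqrt (13/5::real)"
  have len: "length \<sigma> = m" "length \<tau> = m" unfolding \<sigma>_def \<tau>_def by auto
  have cell: "euclid_dist d (\<sigma>!i) (\<tau>!j) = (if inI i \<and> inI j then B else 1)"
    if "i < m" "j < m" for i j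
    using that unfolding \<sigma>_def \<tau>_def d_def B_def by (simp add: dOO dOI dIO dII)
  have B1: "1 < B"
  proof -
    have "sqrt 1 < sqrt (13/5::real)" by (rule real_sqrt_less_mono) simp
    then show ?thesis unfolding B_def by simp
  qed
  have B2: "B \<le> 81/50" unfolding B_def using B_bounds by simp
  have cb: "1 \<le> x \<and> x \<le> B" if T: "is_traversal m m T" and x: "x \<in> set (matched_dists d \<sigma> \<tau> T)" for T x
  proof -
    from x obtain l where l: "l < length T" "x = euclid_dist d (\<sigma> ! fst (T!l)) (\<tau> ! snd (T!l))"
      by (auto simp: set_matched)
    have "fst (T!l) < m" "snd (T!l) < m" using trav_bounds[OF T l(1)] m by auto
    then show ?thesis using l cell B1 by auto
  qed
  define D where "D = map (\<lambda>l. (l, l)) [0..<m]"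
  have Dtr: "is_traversal m m D" unfolding is_traversal_def D_def valid_step_def using m
    by (auto simp: hd_map last_map)
  define g where "g = (\<lambda>l. if l < m then (l, 0) else (m - 1, l - (m - 1)))"
  define P where "P = map g [0..<2*m-1]"
  have Ptr: "is_traversal m m P"
    unfolding is_traversal_def
  proof (intro conjI allI impI)
    show "P \<noteq> []" unfolding P_def using m by simp
    show "hd P = (0,0)" unfolding P_def g_def using m by (simp add: hd_map)
    have ne: "[0..<2*m-1] \<noteq> []" using m by simp
    have lu: "last [0..<2*m-1] = 2*m-1 - 1" by (rule last_upt) (use m in simp)
    have "last P = g (2*m-1-1)" unfolding P_def last_map[OF ne] lu ..
    then show "last P = (m - 1, m - 1)" unfolding g_def using m by simp
    fix l assume "Suc l < length P"
    then have "Suc l < 2*m-1" unfolding P_def by simp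
    then show "valid_step (P ! l) (P ! Suc l)" unfolding P_def g_def valid_step_def
      using m by (simp only: nth_map_upt) auto
  qed
  have "\<forall>T1 T2. opt_kDTW_trav d 1 \<sigma> \<tau> T1 \<longrightarrow> opt_DTW_trav d \<sigma> \<tau> T2 \<longrightarrow>
                  real (length T1) - real (length T2) \<ge> (1/16) * real m"
  proof (intro allI impI)
    fix T1 T2 assume o1: "opt_kDTW_trav d 1 \<sigma> \<tau> T1" and o2: "opt_DTW_trav d \<sigma> \<tau> T2"
    have T1: "is_traversal m m T1" using o1 len unfolding opt_kDTW_trav_def traversals_def by simp
    have T2: "is_traversal m m T2" using o2 len unfolding opt_DTW_trav_def traversals_def by simp
    have "real (length (matched_dists d \<sigma> \<tau> T2)) * 1 \<le> dtw_cost d \<sigma> \<tau> T2"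
      unfolding dtw_cost_def using cb[OF T2] by (intro sum_list_ge_len) auto
    also have "dtw_cost d \<sigma> \<tau> T2 \<le> dtw_cost d \<sigma> \<tau> D"
      using o2 Dtr len unfolding opt_DTW_trav_def traversals_def by auto
    also have "\<dots> \<le> real (length (matched_dists d \<sigma> \<tau> D)) * B"
      unfolding dtw_cost_def using cb[OF Dtr] by (intro sum_list_le_len) auto
    finally have "real (length T2) \<le> real m * B" by (simp add: matched_dists_def D_def)
    moreover have "real m * B \<le> real m * (81/50)" using B2 by (intro mult_left_mono) auto
    ultimately have L2: "real (length T2) \<le> real m * (81/50)" by linarith
    have "kdtw_cost d 1 \<sigma> \<tau> T1 \<le> kdtw_cost d 1 \<sigma> \<tau> P"
      using o1 Ptr len unfolding opt_kDTW_trav_def traversals_def by auto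
    also have "\<dots> \<le> real 1 * 1" unfolding kdtw_cost_def
    proof (rule topk_upper)
      show "\<forall>x\<in>set (matched_dists d \<sigma> \<tau> P). x \<le> 1"
      proof
        fix x assume "x \<in> set (matched_dists d \<sigma> \<tau> P)"
        then obtain l where l: "l < length P" "x = euclid_dist d (\<sigma> ! fst (P!l)) (\<tau> ! snd (P!l))"
          by (auto simp: set_matched)
        have l': "l < 2*m-1" using l unfolding P_def by simp
        have Pl: "P ! l = g l" unfolding P_def using l' by simp
        have bnd: "fst (P!l) < m" "snd (P!l) < m" using trav_bounds[OF Ptr l(1)] m by auto
        have "\<not> (inI (fst (P!l)) \<and> inI (snd (P!l)))" using Pl unfolding g_def inI_def by auto
        then show "x \<le> 1" using l(2) cell[OF bnd] by auto
      qed
    qed simp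
    finally have k1: "kdtw_cost d 1 \<sigma> \<tau> T1 \<le> 1" by simp
    obtain l where l: "l < length T1" "m - 1 \<le> fst (T1!l) + snd (T1!l)" "fst (T1!l) + snd (T1!l) \<le> m"
      using trav_antidiag[OF T1, of "m - 1"] m by auto
    have bnd: "fst (T1!l) < m" "snd (T1!l) < m" using trav_bounds[OF T1 l(1)] m by auto
    have "euclid_dist d (\<sigma> ! fst (T1!l)) (\<tau> ! snd (T1!l)) \<le> kdtw_cost d 1 \<sigma> \<tau> T1"
      unfolding kdtw_cost_def using l(1) by (intro topk_ge_elem) (auto simp: set_matched euclid_nonneg)
    then have "\<not> (inI (fst (T1!l)) \<and> inI (snd (T1!l)))" using k1 cell[OF bnd] B1 by auto
    then have "m - 2 \<le> fst (T1!l) - snd (T1!l) \<or> m - 2 \<le> snd (T1!l) - fst (T1!l)"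
      using l bnd unfolding inI_def by auto
    then have "m + (m - 2) \<le> length T1" using trav_len_ge[OF T1 l(1), of "fst (T1!l)" "snd (T1!l)"] by auto
    then have L1: "2 * real m - 2 \<le> real (length T1)" using m by linarith
    show "real (length T1) - real (length T2) \<ge> (1/16) * real m" using L1 L2 m by linarith
  qed
  then show ?thesis using len by (intro exI[of _ d] exI[of _ 1]) auto
qed


theorem lemmaA4:
  shows "(\<exists>c::real. c > 0 \<and> (\<exists>M::nat. \<forall>m\<ge>M.
            (\<exists>d k \<sigma> \<tau>. length \<sigma> = m \<and> length \<tau> = m \<and> 1 \<le> k \<and>
               (\<forall>T1 T2. opt_kDTW_trav d k \<sigma> \<tau> T1 \<longrightarrow> opt_DTW_trav d \<sigma> \<tau> T2 \<longrightarrow>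
                  real (length T2) - real (length T1) \<ge> c * real m)) \<and>
            (\<exists>d k \<sigma> \<tau>. length \<sigma> = m \<and> length \<tau> = m \<and> 1 \<le> k \<and>
               (\<forall>T1 T2. opt_kDTW_trav d k \<sigma> \<tau> T1 \<longrightarrow> opt_DTW_trav d \<sigma> \<tau> T2 \<longrightarrow>
                  real (length T1) - real (length T2) \<ge> c * real m))))
       \<and> (\<forall>m k. 5 \<le> m \<longrightarrow> 1 \<le> k \<longrightarrow> k \<le> 4 * (m div 5) \<longrightarrow>
            (\<exists>d \<sigma> \<tau>. length \<sigma> = m \<and> length \<tau> = m \<and>
               (\<forall>T. opt_DTW_trav d \<sigma> \<tau> T \<longrightarrow> d_kDTW d k \<sigma> \<tau> \<noteq> kdtw_cost d k \<sigma> \<tau> T)))"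
proof (intro conjI)
  show "\<exists>c::real. c > 0 \<and> (\<exists>M::nat. \<forall>m\<ge>M.
            (\<exists>d k \<sigma> \<tau>. length \<sigma> = m \<and> length \<tau> = m \<and> 1 \<le> k \<and>
               (\<forall>T1 T2. opt_kDTW_trav d k \<sigma> \<tau> T1 \<longrightarrow> opt_DTW_trav d \<sigma> \<tau> T2 \<longrightarrow>
                  real (length T2) - real (length T1) \<ge> c * real m)) \<and>
            (\<exists>d k \<sigma> \<tau>. length \<sigma> = m \<and> length \<tau> = m \<and> 1 \<le> k \<and>
               (\<forall>T1 T2. opt_kDTW_trav d k \<sigma> \<tau> T1 \<longrightarrow> opt_DTW_trav d \<sigma> \<tau> T2 \<longrightarrow>
                  real (length T1) - real (length T2) \<ge> c * real m)))"
    apply (rule exI[of _ "1/16"])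
    apply (intro conjI)
     apply simp
    apply (rule exI[of _ "16::nat"])
    apply (intro allI impI conjI)
     apply (erule instY)
    apply (erule instX)
    done
  show "\<forall>m k. 5 \<le> m \<longrightarrow> 1 \<le> k \<longrightarrow> k \<le> 4 * (m div 5) \<longrightarrow>
            (\<exists>d \<sigma> \<tau>. length \<sigma> = m \<and> length \<tau> = m \<and>
               (\<forall>T. opt_DTW_trav d \<sigma> \<tau> T \<longrightarrow> d_kDTW d k \<sigma> \<tau> \<noteq> kdtw_cost d k \<sigma> \<tau> T))"
  proof (intro allI impI)
    fix m k :: nat assume "5 \<le> m" "1 \<le> k" "k \<le> 4 * (m div 5)"
    moreover have "4 * (m div 5) \<le> m" by simp
    ultimately show "\<exists>d \<sigma> \<tau>. length \<sigma> = m \<and> length \<tau> = m \<and>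
               (\<forall>T. opt_DTW_trav d \<sigma> \<tau> T \<longrightarrow> d_kDTW d k \<sigma> \<tau> \<noteq> kdtw_cost d k \<sigma> \<tau> T)"
      by (intro partii) auto
  qed
qed

end
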